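(* Let $k\ge 3$ be an odd integer. Let $V\subset\mathbb{P}^2$ be the zero-dimensional scheme consisting of: (i) $\frac12k(k-1)-2$ general subschemes of length $2$ (each supported at a general point with a general tangent direction); (ii) a sub-star $P\!\left(k+1,\frac12(k+1)\right)$ (formed from a star configuration of $k+1$ general lines); (iii) $\frac12(k^2+4k+9)$ general points. Then there is no nonzero form of degree $2k-1$ on $\mathbb{P}^2$ vanishing on $V$.
   Context: A star configuration of $a$ lines in $\mathbb{P}^2$ is the union of $a$ general lines (no three concurrent); its singular points are the $\binom{a}{2}$ pairwise intersection points. A sub-star $P(a,b)$ is the set of singular points of a star configuration of $a$ lines with $b$ of these points omitted in such a way that every configuration line contains at most one omitted point; it consists of $\binom{a}{2}-b$ points. "General" means lying in a suitable dense Zariski-open subset of the relevant parameter space, and the various parts of $V$ are general with respect to each other. *)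

theory Defs
  imports Complex_Main
begin

text \<open>Points of C^3 (homogeneous coordinates of P^2) are functions nat => complex,
  only coordinates 0,1,2 are used. A ternary form of degree d is a coefficient
  function on exponent triples (a,b,c) with a+b+c = d.\<close>

definition monoms :: "nat \<Rightarrow> (nat \<times> nat \<times> nat) set" where
  "monoms d = {(a,b,c). a + b + c = d}"

definition form_eval :: "nat \<Rightarrow> (nat \<times> nat \<times> nat \<Rightarrow> complex) \<Rightarrow> (nat \<Rightarrow> complex) \<Rightarrow> complex" where
  "form_eval d F x = (\<Sum>(a,b,c)\<in>monoms d. F (a,b,c) * x 0 ^ a * x 1 ^ b * x 2 ^ c)"

definition form_deriv :: "nat \<Rightarrow> (nat \<times> nat \<times> nat \<Rightarrow> complex) \<Rightarrow> (nat \<Rightarrow> complex) \<Rightarrow> (nat \<Rightarrow> complex) \<Rightarrow> complex" where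
  "form_deriv d F x v = (\<Sum>(a,b,c)\<in>monoms d. F (a,b,c) *
      (of_nat a * x 0 ^ (a - 1) * x 1 ^ b * x 2 ^ c * v 0
     + of_nat b * x 0 ^ a * x 1 ^ (b - 1) * x 2 ^ c * v 1
     + of_nat c * x 0 ^ a * x 1 ^ b * x 2 ^ (c - 1) * v 2))"

text \<open>Intersection point of the lines with coefficient vectors l and m.\<close>
definition cross :: "(nat \<Rightarrow> complex) \<Rightarrow> (nat \<Rightarrow> complex) \<Rightarrow> (nat \<Rightarrow> complex)" where
  "cross l m = (\<lambda>i. if i = 0 then l 1 * m 2 - l 2 * m 1
                    else if i = 1 then l 2 * m 0 - l 0 * m 2
                    else l 0 * m 1 - l 1 * m 0)"

inductive poly_fun :: "nat \<Rightarrow> ((nat \<Rightarrow> complex) \<Rightarrow> complex) \<Rightarrow> bool" for N where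
  pf_const: "poly_fun N (\<lambda>z. c)"
| pf_var: "i < N \<Longrightarrow> poly_fun N (\<lambda>z. z i)"
| pf_add: "poly_fun N f \<Longrightarrow> poly_fun N g \<Longrightarrow> poly_fun N (\<lambda>z. f z + g z)"
| pf_mult: "poly_fun N f \<Longrightarrow> poly_fun N g \<Longrightarrow> poly_fun N (\<lambda>z. f z * g z)"

text \<open>P holds for a general parameter in C^N: it holds on a nonempty Zariski open set
  (the non-vanishing locus of a polynomial which is not identically zero).\<close>
definition generic :: "nat \<Rightarrow> ((nat \<Rightarrow> complex) \<Rightarrow> bool) \<Rightarrow> bool" where
  "generic N P \<longleftrightarrow> (\<exists>G. poly_fun N G \<and> (\<exists>z. G z \<noteq> 0) \<and> (\<forall>z. G z \<noteq> 0 \<longrightarrow> P z))"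

definition blk :: "nat \<Rightarrow> nat \<Rightarrow> (nat \<Rightarrow> complex) \<Rightarrow> (nat \<Rightarrow> complex)" where
  "blk off i z = (\<lambda>c. z (off + 3 * i + c))"

end

theory Submission
  imports Defs "Jordan_Normal_Form.Determinant"
begin

definition lin :: "(nat \<Rightarrow> complex) \<Rightarrow> (nat \<Rightarrow> complex) \<Rightarrow> complex" where
  "lin l x = l 0 * x 0 + l 1 * x 1 + l 2 * x 2"

fun prodF :: "(nat \<Rightarrow> complex) list \<Rightarrow> nat \<times> nat \<times> nat \<Rightarrow> complex" where
  "prodF [] = (\<lambda>(a,b,c). if a = 0 \<and> b = 0 \<and> c = 0 then 1 else 0)"
| "prodF (l # ls) = (\<lambda>(a,b,c). (if 0 < a then l 0 * prodF ls (a-1,b,c) else 0)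
      + (if 0 < b then l 1 * prodF ls (a,b-1,c) else 0)
      + (if 0 < c then l 2 * prodF ls (a,b,c-1) else 0))"

lemma monoms_finite: "finite (monoms d)"
proof -
  have "monoms d \<subseteq> {0..d} \<times> {0..d} \<times> {0..d}" unfolding monoms_def by auto
  thus ?thesis by (rule finite_subset) auto
qed

lemma shift_a: "(\<Sum>t\<in>monoms (Suc e). (if 0 < fst t then h t else 0)) = (\<Sum>t\<in>monoms e. h (Suc (fst t), snd t))"
proof -
  have "(\<Sum>t\<in>monoms (Suc e). (if 0 < fst t then h t else 0)) = (\<Sum>t\<in>{t\<in>monoms (Suc e). 0 < fst t}. h t)"
    by (simp add: sum.inter_filter[symmetric] monoms_finite)
  also have "{t\<in>monoms (Suc e). 0 < fst t} = (\<lambda>t. (Suc (fst t), snd t)) ` monoms e"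
    unfolding monoms_def by (auto simp: image_iff) presburger
  also have "(\<Sum>t\<in>\<dots>. h t) = (\<Sum>t\<in>monoms e. h (Suc (fst t), snd t))"
    by (subst sum.reindex) (auto simp: inj_on_def)
  finally show ?thesis .
qed

lemma shift_b: "(\<Sum>t\<in>monoms (Suc e). (if 0 < fst (snd t) then h t else 0)) = (\<Sum>t\<in>monoms e. h (fst t, Suc (fst (snd t)), snd (snd t)))"
proof -
  have "(\<Sum>t\<in>monoms (Suc e). (if 0 < fst (snd t) then h t else 0)) = (\<Sum>t\<in>{t\<in>monoms (Suc e). 0 < fst (snd t)}. h t)"
    by (simp add: sum.inter_filter[symmetric] monoms_finite)
  also have "{t\<in>monoms (Suc e). 0 < fst (snd t)} = (\<lambda>t. (fst t, Suc (fst (snd t)), snd (snd t))) ` monoms e"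
    unfolding monoms_def by (auto simp: image_iff) presburger
  also have "(\<Sum>t\<in>\<dots>. h t) = (\<Sum>t\<in>monoms e. h (fst t, Suc (fst (snd t)), snd (snd t)))"
    by (subst sum.reindex) (auto simp: inj_on_def)
  finally show ?thesis .
qed

lemma shift_c: "(\<Sum>t\<in>monoms (Suc e). (if 0 < snd (snd t) then h t else 0)) = (\<Sum>t\<in>monoms e. h (fst t, fst (snd t), Suc (snd (snd t))))"
proof -
  have "(\<Sum>t\<in>monoms (Suc e). (if 0 < snd (snd t) then h t else 0)) = (\<Sum>t\<in>{t\<in>monoms (Suc e). 0 < snd (snd t)}. h t)"
    by (simp add: sum.inter_filter[symmetric] monoms_finite)
  also have "{t\<in>monoms (Suc e). 0 < snd (snd t)} = (\<lambda>t. (fst t, fst (snd t), Suc (snd (snd t)))) ` monoms e"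
    unfolding monoms_def by (auto simp: image_iff) presburger
  also have "(\<Sum>t\<in>\<dots>. h t) = (\<Sum>t\<in>monoms e. h (fst t, fst (snd t), Suc (snd (snd t))))"
    by (subst sum.reindex) (auto simp: inj_on_def)
  finally show ?thesis .
qed

lemma form_eval_prodF: "form_eval (length ls) (prodF ls) x = (\<Prod>l\<leftarrow>ls. lin l x)"
proof (induction ls)
  case Nil
  have "monoms 0 = {(0,0,0)}" unfolding monoms_def by auto
  then show ?case by (simp add: form_eval_def)
next
  case (Cons l ls)
  let ?G = "prodF ls" and ?e = "length ls"
  let ?mo = "\<lambda>t::nat\<times>nat\<times>nat. x 0 ^ fst t * x 1 ^ fst (snd t) * x 2 ^ snd (snd t)"
  have fe: "form_eval e F x = (\<Sum>t\<in>monoms e. F t * ?mo t)" for e F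
    unfolding form_eval_def by (rule sum.cong) (auto simp: mult.assoc)
  have "form_eval (length (l#ls)) (prodF (l#ls)) x =
      (\<Sum>t\<in>monoms (Suc ?e). (if 0 < fst t then l 0 * ?G (fst t - 1, snd t) * ?mo t else 0))
    + (\<Sum>t\<in>monoms (Suc ?e). (if 0 < fst (snd t) then l 1 * ?G (fst t, fst (snd t) - 1, snd (snd t)) * ?mo t else 0))
    + (\<Sum>t\<in>monoms (Suc ?e). (if 0 < snd (snd t) then l 2 * ?G (fst t, fst (snd t), snd (snd t) - 1) * ?mo t else 0))"
    unfolding fe by (simp add: sum.distrib[symmetric] split_def distrib_right del: prodF.simps(2)) (rule sum.cong, auto simp: split_def ring_distribs)
  also have "\<dots> = l 0 * x 0 * form_eval ?e ?G x + l 1 * x 1 * form_eval ?e ?G x + l 2 * x 2 * form_eval ?e ?G x"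
    unfolding shift_a shift_b shift_c fe by (simp add: sum_distrib_left algebra_simps)
  also have "\<dots> = (\<Prod>l\<leftarrow>l#ls. lin l x)" using Cons by (simp add: lin_def algebra_simps)
  finally show ?case .
qed


lemma form_deriv_DERIV:
  "((\<lambda>t. form_eval d F (\<lambda>i. x i + t * v i)) has_field_derivative form_deriv d F x v) (at 0)"
proof -
  have "((\<lambda>t. \<Sum>(a,b,c)\<in>monoms d. F (a,b,c) * (x 0 + t * v 0) ^ a * (x 1 + t * v 1) ^ b * (x 2 + t * v 2) ^ c)
     has_field_derivative (\<Sum>(a,b,c)\<in>monoms d. F (a,b,c) *
      (of_nat a * x 0 ^ (a - 1) * x 1 ^ b * x 2 ^ c * v 0
     + of_nat b * x 0 ^ a * x 1 ^ (b - 1) * x 2 ^ c * v 1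
     + of_nat c * x 0 ^ a * x 1 ^ b * x 2 ^ (c - 1) * v 2))) (at 0)"
    unfolding split_def
    apply (rule DERIV_sum)
    apply (rule derivative_eq_intros refl | simp)+
    apply (simp add: algebra_simps)
    done
  then show ?thesis unfolding form_eval_def form_deriv_def by simp
qed

fun dprod :: "(nat \<Rightarrow> complex) list \<Rightarrow> (nat \<Rightarrow> complex) \<Rightarrow> (nat \<Rightarrow> complex) \<Rightarrow> complex" where
  "dprod [] x v = 0"
| "dprod (l # ls) x v = lin l v * (\<Prod>l'\<leftarrow>ls. lin l' x) + lin l x * dprod ls x v"

lemma lin_line: "lin l (\<lambda>i. x i + t * v i) = lin l x + t * lin l v"
  unfolding lin_def by (simp add: algebra_simps)

lemma prod_DERIV: "((\<lambda>t. \<Prod>l\<leftarrow>ls. lin l (\<lambda>i. x i + t * v i)) has_field_derivative dprod ls x v) (at 0)"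
proof (induction ls)
  case Nil
  then show ?case by simp
next
  case (Cons l ls)
  have d1: "((\<lambda>t. lin l x + t * lin l v) has_field_derivative lin l v) (at 0)"
    by (auto intro!: derivative_eq_intros)
  have "((\<lambda>t. (lin l x + t * lin l v) * (\<Prod>l\<leftarrow>ls. lin l (\<lambda>i. x i + t * v i))) has_field_derivative
     lin l v * (\<Prod>l\<leftarrow>ls. lin l (\<lambda>i. x i + 0 * v i)) + dprod ls x v * (lin l x + 0 * lin l v)) (at 0)"
    by (rule DERIV_mult[OF d1 Cons])
  moreover have "((\<lambda>i. x i + 0 * v i)) = x" by simp
  ultimately show ?case by (simp add: lin_line algebra_simps)
qed

lemma form_deriv_prodF: "form_deriv (length ls) (prodF ls) x v = dprod ls x v"
proof -
  have "((\<lambda>t. form_eval (length ls) (prodF ls) (\<lambda>i. x i + t * v i)) has_field_derivative dprod ls x v) (at 0)"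
    unfolding form_eval_prodF by (rule prod_DERIV)
  then show ?thesis using form_deriv_DERIV DERIV_unique by blast
qed

lemma dprod_zero1: "l \<in> set ls \<Longrightarrow> lin l x = 0 \<Longrightarrow> lin l v = 0 \<Longrightarrow> dprod ls x v = 0"
proof (induction ls)
  case Nil then show ?case by simp
next
  case (Cons a ls)
  then show ?case by (cases "a = l") (auto simp: prod_list_zero_iff)
qed

lemma prod_zero: "l \<in> set ls \<Longrightarrow> lin l x = 0 \<Longrightarrow> (\<Prod>l'\<leftarrow>ls. lin l' x) = 0"
  by (induction ls) auto

lemma dprod_zero2: "2 \<le> length (filter (\<lambda>l. lin l x = 0) ls) \<Longrightarrow> dprod ls x v = 0"
proof (induction ls)
  case Nil then show ?case by simp
next
  case (Cons a ls)
  show ?case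
  proof (cases "lin a x = 0")
    case True
    then have "1 \<le> length (filter (\<lambda>l. lin l x = 0) ls)" using Cons.prems by simp
    then obtain l where "l \<in> set ls" "lin l x = 0"
      by (metis (mono_tags, lifting) filter_False le_zero_eq length_0_conv one_neq_zero)
    then show ?thesis using True prod_zero by simp
  next
    case False
    then have "1 \<le> length (filter (\<lambda>l. lin l x = 0) ls)" using Cons.prems by simp
    then obtain l where "l \<in> set ls" "lin l x = 0"
      by (metis (mono_tags, lifting) filter_False le_zero_eq length_0_conv one_neq_zero)
    then show ?thesis using False Cons prod_zero by simp
  qed
qed
lemma dprod_one: "(\<forall>l\<in>set as \<union> set bs. lin l x \<noteq> 0) \<Longrightarrow> lin g x = 0 \<Longrightarrow>
   dprod (as @ g # bs) x v = lin g v * (\<Prod>l\<leftarrow>as @ bs. lin l x)"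
proof (induction as)
  case Nil then show ?case by simp
next
  case (Cons a as)
  then show ?case by (simp add: algebra_simps)
qed


lemma sum_nth_distinct: "distinct xs \<Longrightarrow> (\<Sum>c<length xs. f (xs!c)) = (\<Sum>t\<in>set xs. f t)"
  by (simp add: sum_list_distinct_conv_sum_set[symmetric] sum_list_sum_nth atLeast0LessThan)

lemma det_inj:
  fixes w :: "nat \<Rightarrow> 'b \<Rightarrow> complex"
  assumes ms: "distinct ms" "set ms = S" "length ms = D"
  and det: "det (mat D D (\<lambda>(r,c). w r (ms!c))) \<noteq> 0"
  and rows: "\<forall>r<D. (\<Sum>t\<in>S. F t * w r t) = 0"
  shows "\<forall>t\<in>S. F t = 0"
proof -
  let ?A = "mat D D (\<lambda>(r,c). w r (ms!c))"
  let ?v = "vec D (\<lambda>c. F (ms!c))"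
  have A: "?A \<in> carrier_mat D D" by simp
  have "?A *\<^sub>v ?v = 0\<^sub>v D"
  proof (rule eq_vecI)
    fix r assume r: "r < dim_vec (0\<^sub>v D :: complex vec)"
    have "(?A *\<^sub>v ?v) $ r = (\<Sum>c<D. w r (ms!c) * F (ms!c))"
      using r by (simp add: scalar_prod_def atLeast0LessThan)
    also have "\<dots> = (\<Sum>t\<in>S. F t * w r t)"
      using sum_nth_distinct[OF ms(1), of "\<lambda>t. F t * w r t"] ms by (simp add: mult.commute)
    also have "\<dots> = 0" using rows r by simp
    finally show "(?A *\<^sub>v ?v) $ r = (0\<^sub>v D) $ r" using r by simp
  qed simp
  moreover have "?v \<in> carrier_vec D" by simp
  ultimately have "?v = 0\<^sub>v D" using det det_0_iff_vec_prod_zero[OF A] by blast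
  then have "\<forall>c<D. F (ms!c) = 0" by (metis index_vec index_zero_vec(1))
  then show ?thesis using ms by (metis in_set_conv_nth)
qed

lemma det_tri:
  fixes w :: "nat \<Rightarrow> 'b \<Rightarrow> complex"
  assumes ms: "distinct ms" "set ms = S" "length ms = D"
  and tri: "\<And>r r'. r < r' \<Longrightarrow> r' < D \<Longrightarrow> (\<Sum>t\<in>S. phi r' t * w r t) = 0"
  and diag: "\<And>r. r < D \<Longrightarrow> (\<Sum>t\<in>S. phi r t * w r t) \<noteq> 0"
  shows "det (mat D D (\<lambda>(r,c). w r (ms!c))) \<noteq> 0"
proof -
  let ?A = "mat D D (\<lambda>(r,c). w r (ms!c))"
  let ?B = "mat D D (\<lambda>(c,r). phi r (ms!c))"
  have A: "?A \<in> carrier_mat D D" and B: "?B \<in> carrier_mat D D" by auto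
  have AB: "(?A * ?B) $$ (r,r') = (\<Sum>t\<in>S. phi r' t * w r t)" if "r < D" "r' < D" for r r'
  proof -
    have "(?A * ?B) $$ (r,r') = (\<Sum>c<D. w r (ms!c) * phi r' (ms!c))"
      using that by (simp add: scalar_prod_def atLeast0LessThan)
    also have "\<dots> = (\<Sum>t\<in>S. phi r' t * w r t)"
      using sum_nth_distinct[OF ms(1), of "\<lambda>t. phi r' t * w r t"] ms by (simp add: mult.commute)
    finally show ?thesis .
  qed
  have C: "?A * ?B \<in> carrier_mat D D" using A B by auto
  have "det (?A * ?B) = prod_list (diag_mat (?A * ?B))"
    by (rule det_lower_triangular[OF _ C], subst AB, auto intro: tri)
  also have "\<dots> \<noteq> 0"
    unfolding diag_mat_def prod_list_zero_iff using AB diag by auto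
  finally have "det ?A * det ?B \<noteq> 0" using det_mult[OF A B] by simp
  then show ?thesis by auto
qed

lemma pf_sum: "finite A \<Longrightarrow> (\<And>a. a \<in> A \<Longrightarrow> poly_fun N (f a)) \<Longrightarrow> poly_fun N (\<lambda>z. \<Sum>a\<in>A. f a z)"
proof (induction A rule: finite_induct)
  case empty then show ?case by (simp add: pf_const)
next
  case (insert x F) then show ?case by (simp add: pf_add)
qed

lemma pf_prod: "finite A \<Longrightarrow> (\<And>a. a \<in> A \<Longrightarrow> poly_fun N (f a)) \<Longrightarrow> poly_fun N (\<lambda>z. \<Prod>a\<in>A. f a z)"
proof (induction A rule: finite_induct)
  case empty then show ?case by (simp add: pf_const)
next
  case (insert x F) then show ?case by (simp add: pf_mult)
qed

lemma pf_pow: "poly_fun N f \<Longrightarrow> poly_fun N (\<lambda>z. f z ^ n)"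
  by (induction n) (auto intro: pf_const pf_mult)

lemma pf_diff: "poly_fun N f \<Longrightarrow> poly_fun N g \<Longrightarrow> poly_fun N (\<lambda>z. f z - g z)"
proof -
  assume f: "poly_fun N f" and g: "poly_fun N g"
  have "poly_fun N (\<lambda>z. f z + (-1) * g z)" by (intro pf_add f pf_mult pf_const g)
  then show ?thesis by simp
qed

lemma pf_det: "(\<And>i j. i < D \<Longrightarrow> j < D \<Longrightarrow> poly_fun N (\<lambda>z. e z i j)) \<Longrightarrow>
   poly_fun N (\<lambda>z. det (mat D D (\<lambda>(i,j). e z i j)))"
proof -
  assume e: "\<And>i j. i < D \<Longrightarrow> j < D \<Longrightarrow> poly_fun N (\<lambda>z. e z i j)"
  have "poly_fun N (\<lambda>z. \<Sum>p\<in>{p. p permutes {0..<D}}. signof p * (\<Prod>i=0..<D. e z i (p i)))"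
    apply (rule pf_sum)
     apply (simp add: finite_permutations)
    apply (rule pf_mult[OF pf_const])
    apply (rule pf_prod, simp)
    apply (rule e, simp)
    apply (simp add: permutes_def)
    done
  then show ?thesis
    by (rule back_subst[of "poly_fun N"]) (rule ext, subst det_def'[of _ D], auto intro!: sum.cong prod.cong)
qed


definition KK :: "nat \<Rightarrow> nat" where "KK r = 2*r+1"
definition MM :: "nat \<Rightarrow> nat" where "MM r = r*(2*r+1) - 2"
definition NN :: "nat \<Rightarrow> nat" where "NN r = 2*r^2+6*r+7"
definition DD :: "nat \<Rightarrow> nat" where "DD r = 4*r+1"

datatype cnd = TV nat | TD nat | SP nat nat | PT nat

definition mono :: "nat \<times> nat \<times> nat \<Rightarrow> (nat \<Rightarrow> complex) \<Rightarrow> complex" where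
  "mono t x = (case t of (a,b,c) \<Rightarrow> x 0 ^ a * x 1 ^ b * x 2 ^ c)"

definition dmono :: "nat \<times> nat \<times> nat \<Rightarrow> (nat \<Rightarrow> complex) \<Rightarrow> (nat \<Rightarrow> complex) \<Rightarrow> complex" where
  "dmono t x v = (case t of (a,b,c) \<Rightarrow>
      of_nat a * x 0 ^ (a - 1) * x 1 ^ b * x 2 ^ c * v 0
     + of_nat b * x 0 ^ a * x 1 ^ (b - 1) * x 2 ^ c * v 1
     + of_nat c * x 0 ^ a * x 1 ^ b * x 2 ^ (c - 1) * v 2)"

lemma form_eval_mono: "form_eval d F x = (\<Sum>t\<in>monoms d. F t * mono t x)"
  unfolding form_eval_def mono_def by (rule sum.cong) (auto simp: mult.assoc)

lemma form_deriv_dmono: "form_deriv d F x v = (\<Sum>t\<in>monoms d. F t * dmono t x v)"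
  unfolding form_deriv_def dmono_def by (rule sum.cong) auto

fun cpt :: "nat \<Rightarrow> (nat \<Rightarrow> complex) \<Rightarrow> cnd \<Rightarrow> (nat \<Rightarrow> complex)" where
  "cpt r z (TV i) = blk 0 i z"
| "cpt r z (TD i) = blk 0 i z"
| "cpt r z (SP a b) = cross (blk (6 * MM r) a z) (blk (6 * MM r) b z)"
| "cpt r z (PT i) = blk (6 * MM r + 3 * (KK r + 1)) i z"

fun wt :: "nat \<Rightarrow> (nat \<Rightarrow> complex) \<Rightarrow> cnd \<Rightarrow> nat \<times> nat \<times> nat \<Rightarrow> complex" where
  "wt r z (TD i) t = dmono t (blk 0 i z) (blk (3 * MM r) i z)"
| "wt r z c t = mono t (cpt r z c)"

fun valid :: "nat \<Rightarrow> cnd \<Rightarrow> bool" where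
  "valid r (TV i) = (i < MM r)"
| "valid r (TD i) = (i < MM r)"
| "valid r (SP a b) = (a < b \<and> b < KK r + 1 \<and> \<not> (even a \<and> b = a + 1))"
| "valid r (PT i) = (i < NN r)"

definition rowval :: "nat \<Rightarrow> (nat \<Rightarrow> complex) \<Rightarrow> cnd \<Rightarrow> (nat \<times> nat \<times> nat \<Rightarrow> complex) \<Rightarrow> complex" where
  "rowval r z c F = (\<Sum>t\<in>monoms (DD r). F t * wt r z c t)"

lemma rowval_TD: "rowval r z (TD i) F = form_deriv (DD r) F (blk 0 i z) (blk (3 * MM r) i z)"
  unfolding rowval_def form_deriv_dmono by simp

lemma rowval_nTD: "\<forall>i. c \<noteq> TD i \<Longrightarrow> rowval r z c F = form_eval (DD r) F (cpt r z c)"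
  unfolding rowval_def form_eval_mono by (cases c) auto

definition Hyp :: "nat \<Rightarrow> (nat \<Rightarrow> complex) \<Rightarrow> (nat \<times> nat \<times> nat \<Rightarrow> complex) \<Rightarrow> bool" where
  "Hyp r z F \<longleftrightarrow> ((\<forall>i<MM r. form_eval (DD r) F (blk 0 i z) = 0
                     \<and> form_deriv (DD r) F (blk 0 i z) (blk (3 * MM r) i z) = 0)
             \<and> (\<forall>i j. i < j \<and> j < KK r + 1 \<and> \<not> (even i \<and> j = i + 1) \<longrightarrow>
                     form_eval (DD r) F (cross (blk (6 * MM r) i z) (blk (6 * MM r) j z)) = 0)
             \<and> (\<forall>i<NN r. form_eval (DD r) F (blk (6 * MM r + 3 * (KK r + 1)) i z) = 0))"

lemma Hyp_rowval: "Hyp r z F \<Longrightarrow> valid r c \<Longrightarrow> rowval r z c F = 0"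
  by (cases c) (auto simp: Hyp_def rowval_TD rowval_nTD)

definition NV :: "nat \<Rightarrow> nat" where "NV r = 6 * MM r + 3 * (KK r + 1) + 3 * NN r"

lemma pf_blk: "off + 3 * i + 3 \<le> N \<Longrightarrow> c < 3 \<Longrightarrow> poly_fun N (\<lambda>z. blk off i z c)"
  unfolding blk_def by (rule pf_var) simp

lemma pf_mono: "(\<And>c. c < 3 \<Longrightarrow> poly_fun N (\<lambda>z. X z c)) \<Longrightarrow> poly_fun N (\<lambda>z. mono t (X z))"
  unfolding mono_def by (cases t) (auto intro!: pf_mult pf_pow)

lemma pf_dmono: "(\<And>c. c < 3 \<Longrightarrow> poly_fun N (\<lambda>z. X z c)) \<Longrightarrow> (\<And>c. c < 3 \<Longrightarrow> poly_fun N (\<lambda>z. Y z c))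
   \<Longrightarrow> poly_fun N (\<lambda>z. dmono t (X z) (Y z))"
  unfolding dmono_def by (cases t) (auto intro!: pf_mult pf_pow pf_add pf_const)

lemma pf_cross: "(\<And>c. c < 3 \<Longrightarrow> poly_fun N (\<lambda>z. X z c)) \<Longrightarrow> (\<And>c. c < 3 \<Longrightarrow> poly_fun N (\<lambda>z. Y z c))
   \<Longrightarrow> c < 3 \<Longrightarrow> poly_fun N (\<lambda>z. cross (X z) (Y z) c)"
proof -
  assume X: "\<And>c. c < 3 \<Longrightarrow> poly_fun N (\<lambda>z. X z c)" and Y: "\<And>c. c < 3 \<Longrightarrow> poly_fun N (\<lambda>z. Y z c)" and c: "c < 3"
  then consider "c = 0" | "c = 1" | "c = 2" by linarith
  then show ?thesis unfolding cross_def
    by cases (simp_all, (intro pf_mult pf_diff X Y; simp)+)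
qed

lemma pf_wt: "valid r c \<Longrightarrow> poly_fun (NV r) (\<lambda>z. wt r z c t)"
proof (cases c)
  case (TV i)
  assume "valid r c"
  then show ?thesis using TV by (auto intro!: pf_mono pf_blk simp: NV_def)
next
  case (TD i)
  assume "valid r c"
  then show ?thesis using TD by (auto intro!: pf_dmono pf_blk simp: NV_def)
next
  case (SP a b)
  assume "valid r c"
  then show ?thesis using SP by (auto intro!: pf_mono pf_cross pf_blk simp: NV_def)
next
  case (PT i)
  assume "valid r c"
  then show ?thesis using PT by (auto intro!: pf_mono pf_blk simp: NV_def)
qed


definition lexl :: "nat \<times> nat \<Rightarrow> nat \<times> nat \<Rightarrow> bool" where
  "lexl p q \<longleftrightarrow> fst p < fst q \<or> (fst p = fst q \<and> snd p < snd q)"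

definition gsl :: "nat \<Rightarrow> (nat \<times> nat) list" where
  "gsl e = [(j,s). j \<leftarrow> [0..<e], s \<leftarrow> [0..<e - j]]"

lemma gsl_set: "set (gsl e) = {(j,s). j < e \<and> s < e - j}"
  unfolding gsl_def by auto

lemma gsl_sorted: "sorted_wrt lexl (gsl e)"
proof -
  have "sorted_wrt lexl [(j,s). j \<leftarrow> [0..<n], s \<leftarrow> [0..<e - j]]" for n
  proof (induction n)
    case 0 then show ?case by simp
  next
    case (Suc n)
    have "sorted_wrt lexl (map (\<lambda>s. (n,s)) [0..<e - n])"
      by (auto simp: sorted_wrt_map lexl_def intro: sorted_wrt_mono_rel[OF _ sorted_wrt_upt])
    then show ?case using Suc by (simp add: sorted_wrt_append) (auto simp: lexl_def)
  qed
  then show ?thesis unfolding gsl_def .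
qed

lemma gsl_nth_lex: "i < j \<Longrightarrow> j < length (gsl e) \<Longrightarrow> lexl (gsl e ! i) (gsl e ! j)"
  using gsl_sorted sorted_wrt_nth_less by blast

lemma gsl_distinct: "distinct (gsl e)"
  unfolding distinct_conv_nth
proof (intro allI impI)
  fix i j assume "i < length (gsl e)" "j < length (gsl e)" "i \<noteq> j"
  then consider "i < j" | "j < i" by linarith
  then show "gsl e ! i \<noteq> gsl e ! j"
    by cases (use \<open>i < length (gsl e)\<close> \<open>j < length (gsl e)\<close> gsl_nth_lex[of i j e] gsl_nth_lex[of j i e] in \<open>auto simp: lexl_def\<close>)
qed

definition msl :: "nat \<Rightarrow> (nat \<times> nat \<times> nat) list" where
  "msl d = map (\<lambda>(a,b). (a, b, d - a - b)) (gsl (Suc d))"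

lemma msl_props: "distinct (msl d)" "set (msl d) = monoms d" "length (msl d) = length (gsl (Suc d))"
proof -
  have inj: "inj_on (\<lambda>(a,b). (a, b, d - a - b)) (set (gsl (Suc d)))"
    by (auto simp: inj_on_def)
  show "distinct (msl d)" unfolding msl_def using gsl_distinct inj by (simp add: distinct_map)
  show "set (msl d) = monoms d"
  proof (rule Set.set_eqI)
    fix t :: "nat \<times> nat \<times> nat"
    obtain a b c where t: "t = (a,b,c)" by (cases t) auto
    show "t \<in> set (msl d) \<longleftrightarrow> t \<in> monoms d"
    proof
      assume "t \<in> set (msl d)"
      then show "t \<in> monoms d" unfolding msl_def monoms_def by (auto simp: gsl_set)
    next
      assume "t \<in> monoms d"
      then have "a + b + c = d" using t by (simp add: monoms_def)
      then have "(a,b) \<in> set (gsl (Suc d))" "t = (\<lambda>(a,b). (a, b, d - a - b)) (a,b)"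
        unfolding gsl_set using t by auto
      then have "t \<in> (\<lambda>(a,b). (a, b, d - a - b)) ` set (gsl (Suc d))" by blast
      then show "t \<in> set (msl d)" unfolding msl_def by simp
    qed
  qed
  show "length (msl d) = length (gsl (Suc d))" unfolding msl_def by simp
qed

lemma gsl_nth_in: "i < length (gsl e) \<Longrightarrow> fst (gsl e ! i) < e \<and> snd (gsl e ! i) < e - fst (gsl e ! i)"
proof -
  assume "i < length (gsl e)"
  then have "gsl e ! i \<in> set (gsl e)" by simp
  then show ?thesis unfolding gsl_set by auto
qed


definition tcnt :: "nat \<Rightarrow> nat \<Rightarrow> nat" where "tcnt r j = min r (MM r - j*r)"
definition pcnt :: "nat \<Rightarrow> nat \<Rightarrow> nat" where "pcnt r j = (2*KK r - j) - 2*tcnt r j"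
definition cum :: "nat \<Rightarrow> nat \<Rightarrow> nat" where "cum r j = (\<Sum>i<j. pcnt r i)"
definition lineOf :: "nat \<Rightarrow> nat \<Rightarrow> nat" where "lineOf r u = (LEAST j. u < cum r (Suc j))"

lemma cum_mono: "i \<le> j \<Longrightarrow> cum r i \<le> cum r j"
  unfolding cum_def by (rule sum_mono2) auto

lemma lineOf_eq: assumes "w < pcnt r j" shows "lineOf r (cum r j + w) = j"
  unfolding lineOf_def
proof (rule Least_equality)
  show "cum r j + w < cum r (Suc j)" using assms by (simp add: cum_def)
next
  fix y assume "cum r j + w < cum r (Suc y)"
  then show "j \<le> y" using cum_mono[of "Suc y" j r] by (cases "Suc y \<le> j") auto
qed

lemma sum_min: "(\<Sum>j<K. min q (m - j*q)) = min (K*q) (m::nat)"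
proof (induction K)
  case 0 then show ?case by simp
next
  case (Suc K)
  then show ?case by (simp add: min_def) (auto simp: algebra_simps)
qed

lemma gauss_lt: "(\<Sum>j<K. j) * 2 = K * (K - 1::nat)"
  by (induction K) (auto simp: algebra_simps)

lemma sum_tcnt: "(\<Sum>j<KK r. tcnt r j) = MM r"
proof -
  have "MM r \<le> KK r * r" unfolding MM_def KK_def by (simp add: algebra_simps)
  then show ?thesis unfolding tcnt_def sum_min by simp
qed

lemma tcnt_le: "tcnt r j \<le> r" unfolding tcnt_def by simp

lemma pcnt_plus: "j < KK r \<Longrightarrow> pcnt r j + 2 * tcnt r j = 2 * KK r - j"
  unfolding pcnt_def using tcnt_le[of r j] by (simp add: KK_def)

lemma cum_total: assumes r: "r \<ge> 1" shows "cum r (KK r) = NN r - (r + 1)"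
proof -
  have "(\<Sum>j<KK r. pcnt r j + 2 * tcnt r j) = (\<Sum>j<KK r. 2 * KK r - j)"
    by (rule sum.cong) (auto simp: pcnt_plus)
  moreover have "(\<Sum>j<KK r. 2 * KK r - j) + (\<Sum>j<KK r. j) = (\<Sum>j<KK r. 2 * KK r)"
    by (subst sum.distrib[symmetric]) (rule sum.cong, auto)
  ultimately have "cum r (KK r) + 2 * MM r + (\<Sum>j<KK r. j) = 2 * KK r * KK r"
    unfolding cum_def sum.distrib sum_tcnt[symmetric] by (simp add: sum_distrib_left)
  then have e: "2 * cum r (KK r) + 4 * MM r + KK r * (KK r - 1) = 4 * KK r * KK r"
    using gauss_lt[of "KK r"] by linarith
  have rr: "1 \<le> r*r" using mult_le_mono[OF r r] by simp
  have e0: "r*(2*r+1) = 2*(r*r) + r" by (simp add: algebra_simps)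
  have m: "MM r + 2 = 2*(r*r) + r" unfolding MM_def e0 using rr by linarith
  have k: "KK r * (KK r - 1) = 4*(r*r) + 2*r" unfolding KK_def by (simp add: algebra_simps)
  have kk: "4 * KK r * KK r = 16*(r*r) + 16*r + 4" unfolding KK_def by (simp add: algebra_simps)
  have n: "NN r = 2*(r*r) + 6*r + 7" unfolding NN_def by (simp add: power2_eq_square)
  show ?thesis using e m k kk n by linarith
qed


definition sb :: "nat \<Rightarrow> nat \<Rightarrow> nat" where "sb a s = a + (if even a then 2 else 1) + s"

definition cond_of :: "nat \<Rightarrow> nat \<times> nat \<Rightarrow> cnd" where
 "cond_of r \<sigma> = (let j = fst \<sigma>; s = snd \<sigma> in
   if j < KK r then
     (if s < 2*tcnt r j then (if even s then TV (j*r + s div 2) else TD (j*r + s div 2))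
      else PT (r + 1 + cum r j + (s - 2*tcnt r j)))
   else (if sb (j - KK r) s \<le> KK r then SP (j - KK r) (sb (j - KK r) s) else PT ((j - KK r) div 2)))"

definition slot :: "nat \<Rightarrow> nat \<times> nat \<Rightarrow> bool" where
  "slot r \<sigma> \<longleftrightarrow> fst \<sigma> < 2*KK r \<and> snd \<sigma> < 2*KK r - fst \<sigma>"

lemma tang_idx: assumes "s < 2*tcnt r j" shows "j*r + s div 2 < MM r" "s div 2 < r"
proof -
  have "s div 2 < tcnt r j" using assms by linarith
  then show "j*r + s div 2 < MM r" "s div 2 < r" unfolding tcnt_def by auto
qed

lemma tang_div: assumes "s < 2*tcnt r j" shows "(j*r + s div 2) div r = j"
proof -
  have "s div 2 < r" using tang_idx[OF assms] by simp
  then show ?thesis by simp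
qed

lemma free_even: assumes "slot r (j,s)" "\<not> j < KK r" "\<not> sb (j - KK r) s \<le> KK r"
  shows "even (j - KK r)" "s = KK r - (j - KK r) - 1"
proof -
  have s: "s < KK r - (j - KK r)" using assms(1,2) unfolding slot_def by auto
  show "even (j - KK r)" using assms(3) s unfolding sb_def by (auto split: if_splits)
  then show "s = KK r - (j - KK r) - 1" using assms(3) s unfolding sb_def by auto
qed

lemma valid_cond: assumes r: "r \<ge> 1" and sl: "slot r \<sigma>" shows "valid r (cond_of r \<sigma>)"
proof -
  obtain j s where \<sigma>: "\<sigma> = (j,s)" by (cases \<sigma>)
  show ?thesis
  proof (cases "j < KK r")
    case True
    show ?thesis
    proof (cases "s < 2*tcnt r j")
      case True2: True
      then show ?thesis using True tang_idx[OF True2] unfolding \<sigma> cond_of_def by auto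
    next
      case False
      have s: "s < 2*KK r - j" using sl \<sigma> unfolding slot_def by auto
      have w: "s - 2*tcnt r j < pcnt r j" using s False pcnt_plus[OF True] by linarith
      have "cum r j + (s - 2*tcnt r j) < cum r (Suc j)" using w by (simp add: cum_def)
      also have "\<dots> \<le> cum r (KK r)" using True by (intro cum_mono) simp
      also have "\<dots> = NN r - (r+1)" using cum_total[OF r] .
      finally have "r + 1 + cum r j + (s - 2*tcnt r j) < NN r" unfolding NN_def by simp
      then show ?thesis using True False unfolding \<sigma> cond_of_def by simp
    qed
  next
    case False
    have a: "j - KK r < KK r" using sl \<sigma> False unfolding slot_def by auto
    show ?thesis
    proof (cases "sb (j - KK r) s \<le> KK r")
      case True
      then show ?thesis using False unfolding \<sigma> cond_of_def by (auto simp: sb_def)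
    next
      case False2: False
      have "(j - KK r) div 2 < NN r" using a unfolding NN_def KK_def by simp
      then show ?thesis using False False2 unfolding \<sigma> cond_of_def by simp
    qed
  qed
qed

definition tau :: "nat \<Rightarrow> nat \<Rightarrow> complex" where "tau r a = of_nat (KK r + a)"
definition Lst :: "complex \<Rightarrow> nat \<Rightarrow> complex" where "Lst t c = (if c = 0 then 2*t else if c = 1 then -1 else - (t*t))"
definition fr :: "nat \<Rightarrow> nat \<Rightarrow> nat \<Rightarrow> complex" where "fr x y c = (if c=0 then of_nat x else if c=1 then of_nat y else 1)"
definition dirv :: "nat \<Rightarrow> complex" where "dirv c = (if c = 0 then 1 else 0)"
definition spt :: "complex \<Rightarrow> nat \<Rightarrow> complex" where "spt t c = (if c=0 then -1 else if c=1 then -2*t - t*t else 1)"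
definition ppt :: "nat \<Rightarrow> nat \<Rightarrow> nat \<Rightarrow> complex" where
  "ppt r p = (if p < r+1 then spt (tau r (2*p)) else fr (MM r + (p - (r+1))) (lineOf r (p - (r+1))))"
definition z0 :: "nat \<Rightarrow> nat \<Rightarrow> complex" where
  "z0 r i = (if i < 3*MM r then fr (i div 3) ((i div 3) div r) (i mod 3)
   else if i < 6*MM r then dirv ((i - 3*MM r) mod 3)
   else if i < 6*MM r + 3*(KK r+1) then Lst (tau r ((i - 6*MM r) div 3)) ((i - 6*MM r) mod 3)
   else ppt r ((i - (6*MM r + 3*(KK r+1))) div 3) ((i - (6*MM r + 3*(KK r+1))) mod 3))"

lemma div3: "c < 3 \<Longrightarrow> (3*i + c) div 3 = (i::nat)" "c < 3 \<Longrightarrow> (3*i + c) mod 3 = (c::nat)"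
  by auto

lemma blk_T: "i < MM r \<Longrightarrow> c < 3 \<Longrightarrow> blk 0 i (z0 r) c = fr i (i div r) c"
  unfolding blk_def z0_def using div3[of c i] by auto

lemma blk_D: "i < MM r \<Longrightarrow> c < 3 \<Longrightarrow> blk (3*MM r) i (z0 r) c = dirv c"
proof -
  assume i: "i < MM r" and c: "c < 3"
  have e: "3 * MM r + 3 * i + c - 3 * MM r = 3*i + c" by simp
  show ?thesis unfolding blk_def z0_def using i c div3[OF c, of i] by (auto simp: e)
qed

lemma blk_L: "a < KK r + 1 \<Longrightarrow> c < 3 \<Longrightarrow> blk (6*MM r) a (z0 r) c = Lst (tau r a) c"
proof -
  assume a: "a < KK r + 1" and c: "c < 3"
  have e: "6 * MM r + 3 * a + c - 6 * MM r = 3*a + c" by simp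
  show ?thesis unfolding blk_def z0_def using a c div3[OF c, of a] by (auto simp: e)
qed

lemma blk_P: "c < 3 \<Longrightarrow> blk (6*MM r + 3*(KK r+1)) p (z0 r) c = ppt r p c"
proof -
  assume c: "c < 3"
  have e: "6 * MM r + 3 * (KK r + 1) + 3 * p + c - (6 * MM r + 3 * (KK r + 1)) = 3*p + c" by simp
  show ?thesis unfolding blk_def z0_def using c div3[OF c, of p] by (auto simp: e)
qed

definition eq3 :: "(nat \<Rightarrow> complex) \<Rightarrow> (nat \<Rightarrow> complex) \<Rightarrow> bool" where
  "eq3 x y \<longleftrightarrow> x 0 = y 0 \<and> x 1 = y 1 \<and> x 2 = y 2"

lemma lin_eq3: "eq3 x y \<Longrightarrow> lin l x = lin l y"
  unfolding eq3_def lin_def by simp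

lemma cross_eq3: "eq3 l l' \<Longrightarrow> eq3 m m' \<Longrightarrow> cross l m = cross l' m'"
  unfolding eq3_def cross_def by (auto intro!: ext)

lemma eq3I: "(\<And>c. c < 3 \<Longrightarrow> x c = y c) \<Longrightarrow> eq3 x y"
  unfolding eq3_def by simp

definition Xc :: "nat \<Rightarrow> nat \<Rightarrow> nat \<Rightarrow> nat" where
  "Xc r j s = (if s < 2*tcnt r j then j*r + s div 2 else MM r + cum r j + (s - 2*tcnt r j))"

definition GP :: "nat \<Rightarrow> nat \<times> nat \<Rightarrow> nat \<Rightarrow> complex" where
  "GP r \<sigma> = (let j = fst \<sigma>; s = snd \<sigma>; a = j - KK r in
    if j < KK r then fr (Xc r j s) j
    else if sb a s \<le> KK r then cross (Lst (tau r a)) (Lst (tau r (sb a s))) else spt (tau r a))"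

definition isD :: "nat \<Rightarrow> nat \<times> nat \<Rightarrow> bool" where
  "isD r \<sigma> \<longleftrightarrow> fst \<sigma> < KK r \<and> snd \<sigma> < 2*tcnt r (fst \<sigma>) \<and> odd (snd \<sigma>)"

lemma front_line: assumes r: "r \<ge> 1" and sl: "slot r (j,s)" and j: "j < KK r" and ns: "\<not> s < 2*tcnt r j"
  shows "s - 2*tcnt r j < pcnt r j" "lineOf r (cum r j + (s - 2*tcnt r j)) = j"
proof -
  have s: "s < 2*KK r - j" using sl unfolding slot_def by auto
  show w: "s - 2*tcnt r j < pcnt r j" using s ns pcnt_plus[OF j] by linarith
  show "lineOf r (cum r j + (s - 2*tcnt r j)) = j" using lineOf_eq[OF w] .
qed

lemma agree: assumes r: "r \<ge> 1" and sl: "slot r \<sigma>"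
  shows "eq3 (cpt r (z0 r) (cond_of r \<sigma>)) (GP r \<sigma>)"
proof -
  obtain j s where \<sigma>: "\<sigma> = (j,s)" by (cases \<sigma>)
  show ?thesis
  proof (cases "j < KK r")
    case True
    show ?thesis
    proof (cases "s < 2*tcnt r j")
      case True2: True
      have i: "j*r + s div 2 < MM r" using tang_idx[OF True2] by simp
      show ?thesis using True True2 unfolding \<sigma> cond_of_def GP_def Xc_def
        by (cases "even s") (auto intro!: eq3I simp: blk_T[OF i] tang_div[OF True2])
    next
      case False
      have l: "lineOf r (cum r j + (s - 2*tcnt r j)) = j" using front_line[OF r sl[unfolded \<sigma>] True False] by simp
      define p where "p = r + 1 + (cum r j + (s - 2*tcnt r j))"
      have cd: "cond_of r \<sigma> = PT p" using True False unfolding \<sigma> cond_of_def p_def by (simp add: add.assoc)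
      have e1: "eq3 (cpt r (z0 r) (PT p)) (ppt r p)" unfolding cpt.simps by (intro eq3I blk_P)
      have "ppt r p = fr (MM r + (cum r j + (s - 2*tcnt r j))) j" unfolding ppt_def p_def using l by simp
      moreover have "GP r \<sigma> = fr (MM r + (cum r j + (s - 2*tcnt r j))) j"
        using True False unfolding \<sigma> GP_def Xc_def by (simp add: add.assoc)
      ultimately show ?thesis using e1 cd by simp
    qed
  next
    case False
    have a: "j - KK r < KK r" using sl \<sigma> False unfolding slot_def by auto
    show ?thesis
    proof (cases "sb (j - KK r) s \<le> KK r")
      case True
      have "cross (blk (6 * MM r) (j - KK r) (z0 r)) (blk (6 * MM r) (sb (j - KK r) s) (z0 r))
         = cross (Lst (tau r (j - KK r))) (Lst (tau r (sb (j - KK r) s)))"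
        using a True by (intro cross_eq3 eq3I blk_L) auto
      then show ?thesis using False True unfolding \<sigma> cond_of_def GP_def eq3_def Let_def by simp
    next
      case False2: False
      have ev: "even (j - KK r)" using free_even[OF sl[unfolded \<sigma>] False False2] by simp
      have lt: "(j - KK r) div 2 < r + 1" using a unfolding KK_def by simp
      have "2 * ((j - KK r) div 2) = j - KK r" using ev by simp
      then have pp: "ppt r ((j - KK r) div 2) = spt (tau r (j - KK r))" using lt unfolding ppt_def by simp
      have e1: "eq3 (cpt r (z0 r) (PT ((j - KK r) div 2))) (ppt r ((j - KK r) div 2))" unfolding cpt.simps by (intro eq3I blk_P)
      have cd: "cond_of r \<sigma> = PT ((j - KK r) div 2)" using False False2 unfolding \<sigma> cond_of_def by simp
      have "GP r \<sigma> = spt (tau r (j - KK r))" using False False2 unfolding \<sigma> GP_def by simp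
      then show ?thesis using e1 cd pp by simp
    qed
  qed
qed

lemma isD_iff: "(\<exists>i. cond_of r \<sigma> = TD i) \<longleftrightarrow> isD r \<sigma>"
  unfolding cond_of_def isD_def Let_def by auto

lemma isD_dir: assumes "cond_of r \<sigma> = TD i" shows "eq3 (blk (3*MM r) i (z0 r)) dirv"
proof -
  have "isD r \<sigma>" using assms isD_iff by blast
  then have "fst \<sigma> < KK r" "snd \<sigma> < 2*tcnt r (fst \<sigma>)" "i = fst \<sigma> * r + snd \<sigma> div 2"
    using assms unfolding isD_def cond_of_def Let_def by (auto split: if_splits)
  then have "i < MM r" using tang_idx by simp
  then show ?thesis by (intro eq3I blk_D)
qed


definition Hl :: "nat \<Rightarrow> nat \<Rightarrow> complex" where "Hl j c = (if c = 0 then 0 else if c = 1 then 1 else - of_nat j)"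
definition Vl :: "nat \<Rightarrow> nat \<Rightarrow> complex" where "Vl x c = (if c = 0 then 1 else if c = 1 then 0 else - of_nat x)"
definition Zl :: "nat \<Rightarrow> complex" where "Zl c = (if c = 2 then 1 else 0)"
definition Lam :: "nat \<Rightarrow> nat \<Rightarrow> nat \<Rightarrow> complex" where
  "Lam r j = (if j < KK r then Hl j else Lst (tau r (j - KK r)))"
definition Nu :: "nat \<Rightarrow> nat \<Rightarrow> nat \<Rightarrow> nat \<Rightarrow> complex" where
  "Nu r j s = (if j < KK r then Vl (Xc r j s) else if sb (j - KK r) s \<le> KK r then Lst (tau r (sb (j - KK r) s)) else Lst (tau r (j - KK r)))"

lemma lin_Hl_fr: "lin (Hl j) (fr x y) = of_nat y - of_nat j" unfolding lin_def Hl_def fr_def by simp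
lemma lin_Vl_fr: "lin (Vl x') (fr x y) = of_nat x - of_nat x'" unfolding lin_def Vl_def fr_def by simp
lemma lin_Zl_fr: "lin Zl (fr x y) = 1" unfolding lin_def Zl_def fr_def by simp
lemma lin_Hl_dir: "lin (Hl j) dirv = 0" unfolding lin_def Hl_def dirv_def by simp
lemma lin_Vl_dir: "lin (Vl x) dirv = 1" unfolding lin_def Vl_def dirv_def by simp
lemma lin_Lst_cross: "lin (Lst c) (cross (Lst a) (Lst b)) = -2*(b-a)*(c-a)*(c-b)"
  unfolding lin_def Lst_def cross_def by (simp add: algebra_simps)
lemma lin_Hl_cross: "lin (Hl j) (cross (Lst a) (Lst b)) = 2*(b-a)*(a*b - of_nat j)"
  unfolding lin_def Hl_def Lst_def cross_def by (simp add: algebra_simps)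
lemma lin_Zl_cross: "lin Zl (cross (Lst a) (Lst b)) = 2*(b-a)"
  unfolding lin_def Zl_def Lst_def cross_def by (simp add: algebra_simps)
lemma lin_Lst_spt: "lin (Lst c) (spt t) = (t - c)*(t + c + 2)"
  unfolding lin_def Lst_def spt_def by (simp add: algebra_simps)
lemma lin_Hl_spt: "lin (Hl j) (spt t) = -2*t - t*t - of_nat j"
  unfolding lin_def Hl_def spt_def by (simp add: algebra_simps)
lemma lin_Zl_spt: "lin Zl (spt t) = 1"
  unfolding lin_def Zl_def spt_def by simp

lemma tau_inj: "tau r a = tau r b \<longleftrightarrow> a = b" unfolding tau_def by simp
lemma tau_diff: "a \<noteq> b \<Longrightarrow> tau r a - tau r b \<noteq> 0" unfolding tau_def by simp
lemma tau_prod: "j < KK r \<Longrightarrow> tau r a * tau r b - of_nat j \<noteq> 0"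
proof -
  assume j: "j < KK r"
  have "j < (KK r + a) * (KK r + b)"
  proof -
    have "KK r \<le> (KK r + a) * (KK r + b)" by (simp add: KK_def trans_le_add1)
    then show ?thesis using j by linarith
  qed
  then have "of_nat ((KK r + a) * (KK r + b)) \<noteq> (of_nat j :: complex)" by (metis less_irrefl of_nat_eq_iff)
  then show ?thesis unfolding tau_def by simp
qed
lemma tau_spt: "-2 * tau r a - tau r a * tau r a - of_nat j \<noteq> 0"
proof -
  have e: "-2 * tau r a - tau r a * tau r a - of_nat j = - of_nat (2*(KK r + a) + (KK r + a)*(KK r + a) + j)"
    unfolding tau_def by simp
  have "(of_nat (2*(KK r + a) + (KK r + a)*(KK r + a) + j) :: complex) \<noteq> 0"
    by (simp only: of_nat_eq_0_iff) (simp add: KK_def)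
  then show ?thesis unfolding e by (metis neg_equal_0_iff_equal)
qed
lemma tau_sum2: "tau r a + tau r b + 2 \<noteq> 0"
proof -
  have e: "tau r a + tau r b + 2 = of_nat (KK r + a + (KK r + b) + 2)" unfolding tau_def by simp
  have "(of_nat (KK r + a + (KK r + b) + 2) :: complex) \<noteq> 0" by (simp only: of_nat_eq_0_iff)
  then show ?thesis unfolding e .
qed
lemma Lst_spt_nz: "a \<noteq> b \<Longrightarrow> lin (Lst (tau r b)) (spt (tau r a)) \<noteq> 0"
  unfolding lin_Lst_spt using tau_diff[of a b r] tau_sum2[of r a b] by simp
lemma Hl_cross_nz: "a \<noteq> b \<Longrightarrow> j < KK r \<Longrightarrow> lin (Hl j) (cross (Lst (tau r a)) (Lst (tau r b))) \<noteq> 0"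
  unfolding lin_Hl_cross using tau_diff[of b a r] tau_prod[of j r a b] by (simp only: mult_eq_0_iff) simp
lemma Hl_spt_nz: "lin (Hl j) (spt (tau r a)) \<noteq> 0"
  unfolding lin_Hl_spt by (rule tau_spt)
lemma Lst_cross_nz: "a \<noteq> b \<Longrightarrow> c \<noteq> a \<Longrightarrow> c \<noteq> b \<Longrightarrow> lin (Lst (tau r c)) (cross (Lst (tau r a)) (Lst (tau r b))) \<noteq> 0"
  unfolding lin_Lst_cross using tau_diff[of b a r] tau_diff[of c a r] tau_diff[of c b r] by simp

lemma Xc_inj: assumes j: "j < KK r" and ss: "s' < s" and sl: "s < 2*KK r - j"
  and eq: "Xc r j s' = Xc r j s"
  shows "s < 2*tcnt r j \<and> odd s \<and> s' = s - 1"
proof (cases "s < 2*tcnt r j")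
  case True
  then have "s' < 2 * tcnt r j" using ss by simp
  then have "s' div 2 = s div 2" using eq True unfolding Xc_def by simp
  then show ?thesis using True ss by presburger
next
  case False
  show ?thesis
  proof (cases "s' < 2*tcnt r j")
    case True
    then have "Xc r j s' < MM r" unfolding Xc_def using tang_idx[OF True] by simp
    moreover have "Xc r j s \<ge> MM r" unfolding Xc_def using False by simp
    ultimately show ?thesis using eq by simp
  next
    case False2: False
    then show ?thesis using eq False ss unfolding Xc_def by simp
  qed
qed

lemma G1: assumes "slot r (j,s)" shows "lin (Lam r j) (GP r (j,s)) = 0"
proof (cases "j < KK r")
  case True then show ?thesis unfolding Lam_def GP_def by (simp add: lin_Hl_fr)
next
  case False
  then show ?thesis unfolding Lam_def GP_def by (simp add: Let_def lin_Lst_cross lin_Lst_spt)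
qed

lemma G1d: "isD r (j,s) \<Longrightarrow> lin (Lam r j) dirv = 0"
  unfolding isD_def Lam_def by (simp add: lin_Hl_dir)

lemma GP_star: "sb a s \<le> KK r \<Longrightarrow> GP r (KK r + a, s) = cross (Lst (tau r a)) (Lst (tau r (sb a s)))"
  unfolding GP_def by simp
lemma GP_free: "\<not> sb a s \<le> KK r \<Longrightarrow> GP r (KK r + a, s) = spt (tau r a)"
  unfolding GP_def by simp
lemma Lam_H: "j < KK r \<Longrightarrow> Lam r j = Hl j" unfolding Lam_def by simp
lemma Lam_L: "Lam r (KK r + a) = Lst (tau r a)" unfolding Lam_def by simp
lemma Nu_star: "sb a s \<le> KK r \<Longrightarrow> Nu r (KK r + a) s = Lst (tau r (sb a s))" unfolding Nu_def by simp

lemma G2: assumes r: "r \<ge> 1" and sl: "slot r (j,s)" and jj: "j' < j"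
  shows "lin (Lam r j') (GP r (j,s)) \<noteq> 0"
proof (cases "j < KK r")
  case True
  then show ?thesis using jj unfolding Lam_def GP_def by (simp add: lin_Hl_fr)
next
  case False
  then obtain a where j: "j = KK r + a" using le_Suc_ex not_less by blast
  have a: "a < KK r" using sl unfolding slot_def j by auto
  have ab: "a \<noteq> sb a s" unfolding sb_def by simp
  show ?thesis
  proof (cases "j' < KK r")
    case True
    show ?thesis
    proof (cases "sb a s \<le> KK r")
      case True2: True
      show ?thesis unfolding j Lam_H[OF True] GP_star[OF True2] by (rule Hl_cross_nz[OF ab True])
    next
      case F2: False
      show ?thesis unfolding j Lam_H[OF True] GP_free[OF F2] by (rule Hl_spt_nz)
    qed
  next
    case False2: False
    then obtain a' where j': "j' = KK r + a'" using le_Suc_ex not_less by blast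
    have aa: "a' < a" using jj unfolding j j' by simp
    show ?thesis
    proof (cases "sb a s \<le> KK r")
      case True
      have "a < sb a s" unfolding sb_def by simp
      then show ?thesis unfolding j j' Lam_L GP_star[OF True] using aa
        by (intro Lst_cross_nz) auto
    next
      case F3: False
      show ?thesis unfolding j j' Lam_L GP_free[OF F3] using aa by (intro Lst_spt_nz) auto
    qed
  qed
qed

lemma G3: assumes r: "r \<ge> 1" and sl: "slot r (j,s)" and ss: "s' < s"
  and nd: "\<not> (isD r (j,s) \<and> s' = s - 1)"
  shows "lin (Nu r j s') (GP r (j,s)) \<noteq> 0"
proof (cases "j < KK r")
  case True
  have s: "s < 2*KK r - j" using sl unfolding slot_def by simp
  have "Xc r j s' \<noteq> Xc r j s" using Xc_inj[OF True ss s] nd True unfolding isD_def by auto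
  then show ?thesis using True unfolding Nu_def GP_def by (simp add: lin_Vl_fr)
next
  case False
  then obtain a where j: "j = KK r + a" using le_Suc_ex not_less by blast
  have a: "a < KK r" and s: "s < KK r - a" using sl unfolding slot_def j by auto
  have sb': "sb a s' \<le> KK r" using s ss unfolding sb_def by auto
  have ab: "a < sb a s'" "sb a s' < sb a s" using ss unfolding sb_def by auto
  show ?thesis
  proof (cases "sb a s \<le> KK r")
    case True
    have "a < sb a s" unfolding sb_def by simp
    then show ?thesis unfolding j Nu_star[OF sb'] GP_star[OF True] using ab
      by (intro Lst_cross_nz) auto
  next
    case F2: False
    show ?thesis unfolding j Nu_star[OF sb'] GP_free[OF F2] using ab
      by (intro Lst_spt_nz) auto
  qed
qed

lemma G4: "lin (Nu r j s) (GP r (j,s)) = 0"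
  unfolding Nu_def GP_def by (simp add: Let_def lin_Vl_fr lin_Lst_cross lin_Lst_spt)

lemma G5: assumes "isD r (j,s)" shows "Nu r j (s-1) = Nu r j s" "lin (Nu r j (s-1)) dirv \<noteq> 0"
proof -
  have j: "j < KK r" and s: "s < 2*tcnt r j" "odd s" using assms unfolding isD_def by auto
  have "(s - 1) div 2 = s div 2" using s(2) by (metis odd_two_times_div_two_nat div_mult_self1_is_m zero_less_numeral) 
  moreover have "s - 1 < 2*tcnt r j" using s by simp
  ultimately have "Xc r j (s-1) = Xc r j s" using s unfolding Xc_def by simp
  then show "Nu r j (s-1) = Nu r j s" using j unfolding Nu_def by simp
  show "lin (Nu r j (s-1)) dirv \<noteq> 0" using j unfolding Nu_def by (simp add: lin_Vl_dir)
qed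

lemma G6: assumes "slot r (j,s)" shows "lin Zl (GP r (j,s)) \<noteq> 0"
  unfolding GP_def by (auto simp: Let_def lin_Zl_fr lin_Zl_cross lin_Zl_spt tau_inj sb_def)


definition fac :: "nat \<Rightarrow> nat \<times> nat \<Rightarrow> (nat \<Rightarrow> complex) list" where
  "fac r \<sigma> = map (Lam r) [0..<fst \<sigma>] @ map (Nu r (fst \<sigma>)) [0..<snd \<sigma>] @ replicate (DD r - fst \<sigma> - snd \<sigma>) Zl"

lemma KK_DD: "2 * KK r = Suc (DD r)" unfolding KK_def DD_def by simp

lemma fac_len: "slot r \<sigma> \<Longrightarrow> length (fac r \<sigma>) = DD r"
  unfolding fac_def slot_def KK_DD by auto

definition EV :: "nat \<Rightarrow> nat \<times> nat \<Rightarrow> nat \<times> nat \<Rightarrow> complex" where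
  "EV r \<sigma>' \<sigma> = (if isD r \<sigma>' then dprod (fac r \<sigma>) (GP r \<sigma>') dirv else (\<Prod>l\<leftarrow>fac r \<sigma>. lin l (GP r \<sigma>')))"

lemma dprod_cong: "eq3 x x' \<Longrightarrow> eq3 v v' \<Longrightarrow> dprod ls x v = dprod ls x' v'"
proof (induction ls)
  case Nil then show ?case by simp
next
  case (Cons l ls)
  have "(\<Prod>l'\<leftarrow>ls. lin l' x) = (\<Prod>l'\<leftarrow>ls. lin l' x')" using lin_eq3[OF Cons.prems(1)] by simp
  then show ?case using Cons lin_eq3 by simp
qed

lemma rowval_EV: assumes r: "r \<ge> 1" and s1: "slot r \<sigma>'" and s2: "slot r \<sigma>"
  shows "rowval r (z0 r) (cond_of r \<sigma>') (prodF (fac r \<sigma>)) = EV r \<sigma>' \<sigma>"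
proof (cases "isD r \<sigma>'")
  case True
  then obtain i where c: "cond_of r \<sigma>' = TD i" using isD_iff by blast
  have e1: "eq3 (blk 0 i (z0 r)) (GP r \<sigma>')" using agree[OF r s1] c by simp
  have e2: "eq3 (blk (3*MM r) i (z0 r)) dirv" using isD_dir[OF c] .
  show ?thesis unfolding c rowval_TD EV_def using True fac_len[OF s2]
    form_deriv_prodF[of "fac r \<sigma>"] dprod_cong[OF e1 e2] by simp
next
  case False
  then have c: "\<forall>i. cond_of r \<sigma>' \<noteq> TD i" using isD_iff by blast
  have e1: "eq3 (cpt r (z0 r) (cond_of r \<sigma>')) (GP r \<sigma>')" using agree[OF r s1] .
  have "(\<Prod>l\<leftarrow>fac r \<sigma>. lin l (cpt r (z0 r) (cond_of r \<sigma>'))) = (\<Prod>l\<leftarrow>fac r \<sigma>. lin l (GP r \<sigma>'))"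
    using lin_eq3[OF e1] by simp
  then show ?thesis unfolding rowval_nTD[OF c] EV_def using False fac_len[OF s2]
    form_eval_prodF[of "fac r \<sigma>"] by simp
qed

lemma filter_two: assumes "a < b" "b < s" "P a" "P b"
  shows "2 \<le> length (filter P [0..<s])"
proof -
  have "{a,b} \<subseteq> set (filter P [0..<s])" using assms by auto
  then have "card {a,b} \<le> card (set (filter P [0..<s]))" by (intro card_mono) auto
  also have "\<dots> = length (filter P [0..<s])" by (intro distinct_card) simp
  finally show ?thesis using assms by simp
qed

lemma EV_zero: assumes r: "r \<ge> 1" and s1: "slot r \<sigma>'" and s2: "slot r \<sigma>" and lx: "lexl \<sigma>' \<sigma>"
  shows "EV r \<sigma>' \<sigma> = 0"
proof -
  obtain j' s' where \<sigma>': "\<sigma>' = (j',s')" by (cases \<sigma>')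
  obtain j s where \<sigma>: "\<sigma> = (j,s)" by (cases \<sigma>)
  consider "j' < j" | "j' = j" "s' < s" using lx unfolding lexl_def \<sigma> \<sigma>' by auto
  then show ?thesis
  proof cases
    case 1
    have mem: "Lam r j' \<in> set (fac r \<sigma>)" using 1 unfolding fac_def \<sigma> by auto
    have z: "lin (Lam r j') (GP r \<sigma>') = 0" using G1[OF s1[unfolded \<sigma>']] \<sigma>' by simp
    show ?thesis
    proof (cases "isD r \<sigma>'")
      case True
      have "lin (Lam r j') dirv = 0" using G1d True \<sigma>' by simp
      then show ?thesis unfolding EV_def using True dprod_zero1[OF mem z] by simp
    next
      case False
      then show ?thesis unfolding EV_def using prod_zero[OF mem z] by simp
    qed
  next
    case 2
    have mem: "Nu r j s' \<in> set (fac r \<sigma>)" using 2 unfolding fac_def \<sigma> by auto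
    have z: "lin (Nu r j s') (GP r \<sigma>') = 0" using G4 \<sigma>' 2 by simp
    show ?thesis
    proof (cases "isD r \<sigma>'")
      case True
      have D: "isD r (j,s')" using True \<sigma>' 2 by simp
      then have s1': "s' \<ge> 1" unfolding isD_def by (cases s') auto
      have z2: "lin (Nu r j (s'-1)) (GP r \<sigma>') = 0" using z G5(1)[OF D] by simp
      let ?P = "\<lambda>l. lin l (GP r \<sigma>') = 0"
      have "2 \<le> length (filter (?P \<circ> Nu r j) [0..<s])"
        by (rule filter_two[of "s'-1" s']) (use s1' 2 z z2 in auto)
      also have "\<dots> = length (filter ?P (map (Nu r j) [0..<s]))" by (simp add: filter_map)
      also have "\<dots> \<le> length (filter ?P (fac r \<sigma>))" unfolding fac_def \<sigma> by simp
      finally show ?thesis unfolding EV_def using True dprod_zero2 by simp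
    next
      case False
      then show ?thesis unfolding EV_def using prod_zero[OF mem z] by simp
    qed
  qed
qed

lemma EV_diag: assumes r: "r \<ge> 1" and sl: "slot r \<sigma>" shows "EV r \<sigma> \<sigma> \<noteq> 0"
proof -
  obtain j s where \<sigma>: "\<sigma> = (j,s)" by (cases \<sigma>)
  have sl': "slot r (j,s)" using sl \<sigma> by simp
  show ?thesis
  proof (cases "isD r \<sigma>")
    case False
    have "\<forall>l\<in>set (fac r \<sigma>). lin l (GP r \<sigma>) \<noteq> 0"
      using G2[OF r sl'] G3[OF r sl'] G6[OF sl'] False unfolding fac_def \<sigma> by auto
    then show ?thesis unfolding EV_def using False by (auto simp: prod_list_zero_iff)
  next
    case True
    have D: "isD r (j,s)" using True \<sigma> by simp
    then have s1: "s \<ge> 1" unfolding isD_def by (cases s) auto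
    have up: "[0..<s] = [0..<s-1] @ [s-1]" using s1 by (cases s) simp_all
    define as where "as = map (Lam r) [0..<j] @ map (Nu r j) [0..<s-1]"
    define bs where "bs = replicate (DD r - j - s) Zl"
    have f: "fac r \<sigma> = as @ Nu r j (s-1) # bs" unfolding fac_def as_def bs_def \<sigma> using s1 by (cases s) simp_all
    have nz: "\<forall>l\<in>set as \<union> set bs. lin l (GP r \<sigma>) \<noteq> 0"
      using G2[OF r sl'] G3[OF r sl'] G6[OF sl'] unfolding as_def bs_def \<sigma> by auto
    have g0: "lin (Nu r j (s-1)) (GP r \<sigma>) = 0" using G4 G5(1)[OF D] \<sigma> by simp
    have "dprod (fac r \<sigma>) (GP r \<sigma>) dirv = lin (Nu r j (s-1)) dirv * (\<Prod>l\<leftarrow>as @ bs. lin l (GP r \<sigma>))"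
      unfolding f by (rule dprod_one[OF nz g0])
    moreover have "(\<Prod>l\<leftarrow>as @ bs. lin l (GP r \<sigma>)) \<noteq> 0" using nz by (auto simp: prod_list_zero_iff)
    ultimately show ?thesis unfolding EV_def using True G5(2)[OF D] by simp
  qed
qed

definition SL :: "nat \<Rightarrow> (nat \<times> nat) list" where "SL r = gsl (Suc (DD r))"

lemma SL_slot: "i < length (SL r) \<Longrightarrow> slot r (SL r ! i)"
  unfolding SL_def slot_def KK_DD using gsl_nth_in by blast

definition Mz :: "nat \<Rightarrow> (nat \<Rightarrow> complex) \<Rightarrow> complex mat" where
  "Mz r z = mat (length (SL r)) (length (SL r)) (\<lambda>(i,c). wt r z (cond_of r (SL r ! i)) (msl (DD r) ! c))"

lemma z0_det: assumes r: "r \<ge> 1" shows "det (Mz r (z0 r)) \<noteq> 0"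
  unfolding Mz_def
proof (rule det_tri[where phi = "\<lambda>i. prodF (fac r (SL r ! i))"])
  show "distinct (msl (DD r))" "set (msl (DD r)) = monoms (DD r)" "length (msl (DD r)) = length (SL r)"
    using msl_props unfolding SL_def by auto
next
  fix i i' assume ii: "i < i'" "i' < length (SL r)"
  have "(\<Sum>t\<in>monoms (DD r). prodF (fac r (SL r ! i')) t * wt r (z0 r) (cond_of r (SL r ! i)) t)
     = rowval r (z0 r) (cond_of r (SL r ! i)) (prodF (fac r (SL r ! i')))" unfolding rowval_def ..
  also have "\<dots> = EV r (SL r ! i) (SL r ! i')" using rowval_EV[OF r SL_slot SL_slot] ii by simp
  also have "\<dots> = 0" using EV_zero[OF r SL_slot SL_slot] ii gsl_nth_lex unfolding SL_def by auto
  finally show "(\<Sum>t\<in>monoms (DD r). prodF (fac r (SL r ! i')) t * wt r (z0 r) (cond_of r (SL r ! i)) t) = 0" .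
next
  fix i assume i: "i < length (SL r)"
  have "(\<Sum>t\<in>monoms (DD r). prodF (fac r (SL r ! i)) t * wt r (z0 r) (cond_of r (SL r ! i)) t)
     = rowval r (z0 r) (cond_of r (SL r ! i)) (prodF (fac r (SL r ! i)))" unfolding rowval_def ..
  also have "\<dots> = EV r (SL r ! i) (SL r ! i)" using rowval_EV[OF r SL_slot SL_slot] i by simp
  finally show "(\<Sum>t\<in>monoms (DD r). prodF (fac r (SL r ! i)) t * wt r (z0 r) (cond_of r (SL r ! i)) t) \<noteq> 0"
    using EV_diag[OF r SL_slot[OF i]] by simp
qed


lemma main: assumes r: "r \<ge> 1"
  shows "generic (NV r) (\<lambda>z. \<forall>F. Hyp r z F \<longrightarrow> (\<forall>t\<in>monoms (DD r). F t = 0))"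
  unfolding generic_def
proof (rule exI[of _ "\<lambda>z. det (Mz r z)"], intro conjI)
  show "poly_fun (NV r) (\<lambda>z. det (Mz r z))"
    unfolding Mz_def by (rule pf_det) (simp add: pf_wt valid_cond[OF r SL_slot])
  show "\<exists>z. det (Mz r z) \<noteq> 0" using z0_det[OF r] by blast
  show "\<forall>z. det (Mz r z) \<noteq> 0 \<longrightarrow> (\<forall>F. Hyp r z F \<longrightarrow> (\<forall>t\<in>monoms (DD r). F t = 0))"
  proof (intro allI impI)
    fix z F assume d: "det (Mz r z) \<noteq> 0" and h: "Hyp r z F"
    show "\<forall>t\<in>monoms (DD r). F t = 0"
    proof (rule det_inj[where w = "\<lambda>i t. wt r z (cond_of r (SL r ! i)) t"])
      show "distinct (msl (DD r))" "set (msl (DD r)) = monoms (DD r)" "length (msl (DD r)) = length (SL r)"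
        using msl_props unfolding SL_def by auto
      show "det (mat (length (SL r)) (length (SL r)) (\<lambda>(i, c). wt r z (cond_of r (SL r ! i)) (msl (DD r) ! c))) \<noteq> 0"
        using d unfolding Mz_def .
      show "\<forall>i<length (SL r). (\<Sum>t\<in>monoms (DD r). F t * wt r z (cond_of r (SL r ! i)) t) = 0"
        using Hyp_rowval[OF h valid_cond[OF r SL_slot]] unfolding rowval_def by blast
    qed
  qed
qed

theorem mainTheorem4:
  fixes k :: nat
  assumes "k \<ge> 3" and "odd k"
  shows "let d = 2 * k - 1;
             m = k * (k - 1) div 2 - 2;
             n = (k^2 + 4 * k + 9) div 2;
             N = 6 * m + 3 * (k + 1) + 3 * n
         in generic N (\<lambda>z. \<forall>F.
              ((\<forall>i<m. form_eval d F (blk 0 i z) = 0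
                     \<and> form_deriv d F (blk 0 i z) (blk (3 * m) i z) = 0)
             \<and> (\<forall>i j. i < j \<and> j < k + 1 \<and> \<not> (even i \<and> j = i + 1) \<longrightarrow>
                     form_eval d F (cross (blk (6 * m) i z) (blk (6 * m) j z)) = 0)
             \<and> (\<forall>i<n. form_eval d F (blk (6 * m + 3 * (k + 1)) i z) = 0))
             \<longrightarrow> (\<forall>t\<in>monoms d. F t = 0))"
proof -
  obtain r where k: "k = 2*r+1" using assms(2) oddE by blast
  have r: "r \<ge> 1" using assms(1) k by simp
  have kk: "k = KK r" unfolding KK_def k ..
  have d: "2 * k - 1 = DD r" unfolding DD_def k by simp
  have m: "k * (k - 1) div 2 - 2 = MM r" unfolding MM_def k by (simp add: algebra_simps)
  have n: "(k^2 + 4 * k + 9) div 2 = NN r"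
  proof -
    have "k^2 + 4 * k + 9 = 2 * (2*r^2+6*r+7)" unfolding k by (simp add: power2_eq_square algebra_simps)
    then show ?thesis unfolding NN_def by simp
  qed
  have N: "6 * MM r + 3 * (KK r + 1) + 3 * NN r = NV r" unfolding NV_def ..
  show ?thesis
    unfolding Let_def d m n
    using main[OF r] unfolding Hyp_def kk N .
qed

end
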